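(* Let $\Gamma$ be a group and $n \ge 0$ an integer. Then the quotient $P\mathcal{S}(\Gamma)/\overline{D^n}(P\mathcal{S}(\Gamma))$ is canonically isomorphic to $\Gamma/D^n(\Gamma)$.
   Context: For a group $\Gamma$, let $\mathcal{S}$ be the family of all normal subgroups $N$ of $\Gamma$ with $\Gamma/N$ soluble; it is directed (the intersection of two members contains a member). Let $\mathcal{C}\mathcal{S}(\Gamma)=\bigcap_{N\in\mathcal{S}}N$. The group $\Gamma/\mathcal{C}\mathcal{S}(\Gamma)$ carries the Hausdorff group topology for which the images of the members of $\mathcal{S}$ form a basis of neighbourhoods of the identity; its completion (with respect to the left uniformity) is the true prosoluble completion $P\mathcal{S}(\Gamma)$, a complete Hausdorff topological group, which can be identified with the inverse limit $\varprojlim_{N\in\mathcal{S}}\Gamma/N$. There is a canonical homomorphism $\Gamma\to P\mathcal{S}(\Gamma)$ with dense image. $D^n(\Gamma)$ denotes the $n$-th term of the derived series ($D^0(\Gamma)=\Gamma$, $D^{n+1}(\Gamma)=[D^n(\Gamma),D^n(\Gamma)]$). For a topological group $G$, the topological derived series is defined by $\overline{D^0}(G)=G$ and $\overline{D^{n+1}}(G)$ = the closure of the subgroup generated by the commutators $a^{-1}b^{-1}ab$ with $a,b\in\overline{D^n}(G)$. *)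

theory Defs
  imports "HOL-Analysis.Analysis" "HOL-Algebra.Algebra"
begin

definition sol_quots :: "('a, 'b) monoid_scheme \<Rightarrow> 'a set set" where
  "sol_quots \<Gamma> = {N. N \<lhd> \<Gamma> \<and> solvable (\<Gamma> Mod N)}"

text \<open>The true prosoluble completion, realised as the inverse limit of the
  quotients Gamma/N (N in sol_quots), i.e. compatible families of cosets.\<close>
definition PS_carrier :: "('a, 'b) monoid_scheme \<Rightarrow> ('a set \<Rightarrow> 'a set) set" where
  "PS_carrier \<Gamma> =
     {x \<in> (\<Pi>\<^sub>E N\<in>sol_quots \<Gamma>. carrier (\<Gamma> Mod N)).
        \<forall>M\<in>sol_quots \<Gamma>. \<forall>N\<in>sol_quots \<Gamma>. M \<subseteq> N \<longrightarrow> x M \<subseteq> x N}"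

definition PS :: "('a, 'b) monoid_scheme \<Rightarrow> ('a set \<Rightarrow> 'a set) monoid" where
  "PS \<Gamma> = \<lparr> carrier = PS_carrier \<Gamma>,
             mult = (\<lambda>x y. \<lambda>N\<in>sol_quots \<Gamma>. x N <#>\<^bsub>\<Gamma>\<^esub> y N),
             one = (\<lambda>N\<in>sol_quots \<Gamma>. N) \<rparr>"

definition PS_topology :: "('a, 'b) monoid_scheme \<Rightarrow> ('a set \<Rightarrow> 'a set) topology" where
  "PS_topology \<Gamma> =
     subtopology (product_topology (\<lambda>N. discrete_topology (carrier (\<Gamma> Mod N))) (sol_quots \<Gamma>))
                 (PS_carrier \<Gamma>)"

definition PS_canon :: "('a, 'b) monoid_scheme \<Rightarrow> 'a \<Rightarrow> ('a set \<Rightarrow> 'a set)" where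
  "PS_canon \<Gamma> g = (\<lambda>N\<in>sol_quots \<Gamma>. N #>\<^bsub>\<Gamma>\<^esub> g)"

definition commutators :: "('c, 'd) monoid_scheme \<Rightarrow> 'c set \<Rightarrow> 'c set" where
  "commutators G H = {inv\<^bsub>G\<^esub> a \<otimes>\<^bsub>G\<^esub> inv\<^bsub>G\<^esub> b \<otimes>\<^bsub>G\<^esub> a \<otimes>\<^bsub>G\<^esub> b | a b. a \<in> H \<and> b \<in> H}"

fun top_derived :: "('c, 'd) monoid_scheme \<Rightarrow> 'c topology \<Rightarrow> nat \<Rightarrow> 'c set" where
  "top_derived G T 0 = carrier G"
| "top_derived G T (Suc n) = T closure_of (generate G (commutators G (top_derived G T n)))"

end

theory Submission
  imports Defs "HOL-Algebra.Product_Groups"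
begin


context group begin

abbreviation DD :: "nat \<Rightarrow> 'a set" where "DD k \<equiv> (derived G ^^ k) (carrier G)"

lemma DD_normal: "DD k \<lhd> G"
  by (induct k) (auto intro: derived_is_normal normal_self)

lemma DD_subgroup: "subgroup (DD k) G"
  using DD_normal normal_imp_subgroup by blast

lemma DD_Suc_le: "DD (Suc k) \<subseteq> DD k"
  using derived_incl[OF subset_refl DD_subgroup[of k]] by simp

lemma DD_antimono: "k \<le> l \<Longrightarrow> DD l \<subseteq> DD k"
  by (rule lift_Suc_antimono_le[of DD]) (use DD_Suc_le in auto)

lemma sol_quots_iff: "N \<in> sol_quots G \<longleftrightarrow> N \<lhd> G \<and> (\<exists>k. DD k \<subseteq> N)"
proof (cases "N \<lhd> G")
  case True
  interpret N: normal N G by fact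
  interpret Q: group "G Mod N" by (rule N.factorgroup_is_group)
  have hg: "group_hom G (G Mod N) (\<lambda>a. N #> a)"
    unfolding group_hom_def group_hom_axioms_def using is_group Q.is_group N.r_coset_hom_Mod by blast
  have img: "(\<lambda>a. N #> a) ` carrier G = carrier (G Mod N)"
    by (auto simp: FactGroup_def RCOSETS_def)
  have e: "(derived (G Mod N) ^^ k) (carrier (G Mod N)) = (\<lambda>a. N #> a) ` DD k" for k
    using group_hom.exp_of_derived_img[OF hg, of "carrier G" k] img by simp
  have eq: "((\<lambda>a. N #> a) ` DD k = {N}) \<longleftrightarrow> DD k \<subseteq> N" for k
  proof
    assume a: "(\<lambda>a. N #> a) ` DD k = {N}"
    show "DD k \<subseteq> N"
    proof
      fix x assume x: "x \<in> DD k"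
      then have xc: "x \<in> carrier G" using DD_subgroup subgroup.subset by blast
      have "N #> x = N" using a x by blast
      then show "x \<in> N" using rcos_self[OF xc N.subgroup_axioms] by simp
    qed
  next
    assume a: "DD k \<subseteq> N"
    have "\<one> \<in> DD k" using DD_subgroup subgroup.one_closed by blast
    moreover have "N #> x = N" if "x \<in> DD k" for x
      using N.rcos_const[OF is_group] a that by blast
    ultimately show "(\<lambda>a. N #> a) ` DD k = {N}" by blast
  qed
  have one: "\<one>\<^bsub>G Mod N\<^esub> = N" by (simp add: FactGroup_def)
  have "solvable (G Mod N) \<longleftrightarrow> (\<exists>k. DD k \<subseteq> N)"
    unfolding Q.solvable_iff_trivial_derived_seq e one eq ..
  then show ?thesis
    using True by (simp add: sol_quots_def)
next
  case False
  then show ?thesis by (simp add: sol_quots_def)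
qed

lemma DD_sol: "DD k \<in> sol_quots G"
  using sol_quots_iff DD_normal by blast

lemma sol_normal: "N \<in> sol_quots G \<Longrightarrow> N \<lhd> G"
  by (simp add: sol_quots_def)

lemma sol_subgroup: "N \<in> sol_quots G \<Longrightarrow> subgroup N G"
  using sol_normal normal_imp_subgroup by blast

lemma coset_unique:
  assumes "subgroup N G" "Y \<in> rcosets N" "g \<in> Y" shows "Y = N #> g"
proof -
  obtain a where a: "a \<in> carrier G" "Y = N #> a" using assms(2) by (auto simp: RCOSETS_def)
  show ?thesis using repr_independence[of g N a] a assms by simp
qed

lemma rcos_mono: "M \<subseteq> N \<Longrightarrow> M #> g \<subseteq> N #> g"
  by (auto simp: r_coset_def)

lemma rcos_in_rcosets: "g \<in> carrier G \<Longrightarrow> N #> g \<in> rcosets N"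
  by (auto simp: RCOSETS_def)

lemma PS_carrier_transfer:
  assumes "x \<in> PS_carrier G" "M \<in> sol_quots G" "N \<in> sol_quots G" "M \<subseteq> N"
    "x M = M #> g" "g \<in> carrier G"
  shows "x N = N #> g"
proof -
  have "g \<in> x M" using assms rcos_self sol_subgroup by metis
  also have "x M \<subseteq> x N" using assms unfolding PS_carrier_def by blast
  finally have "g \<in> x N" .
  moreover have "x N \<in> rcosets N" using assms(1,3) unfolding PS_carrier_def FactGroup_def by auto
  ultimately show ?thesis using coset_unique sol_subgroup assms by blast
qed

lemma PS_rep:
  assumes "x \<in> PS_carrier G" "N \<in> sol_quots G"
  shows "\<exists>a\<in>carrier G. x N = N #> a"
proof -
  have "x N \<in> carrier (G Mod N)" using assms unfolding PS_carrier_def by (auto simp: PiE_iff)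
  then show ?thesis by (auto simp: FactGroup_def RCOSETS_def)
qed

abbreviation PG where "PG \<equiv> product_group (sol_quots G) (\<lambda>N. G Mod N)"

lemma PG_group: "group PG"
  by (rule product_group) (simp add: sol_normal normal.factorgroup_is_group)

lemma PS_eq: "PS G = PG\<lparr>carrier := PS_carrier G\<rparr>"
  by (simp add: PS_def product_group_def FactGroup_def)

lemma PS_carrierI:
  assumes "x \<in> extensional (sol_quots G)"
    "\<And>M. M \<in> sol_quots G \<Longrightarrow> \<exists>a\<in>carrier G. x M = M #> a \<and> (\<forall>N\<in>sol_quots G. M \<subseteq> N \<longrightarrow> x N = N #> a)"
  shows "x \<in> PS_carrier G"
  unfolding PS_carrier_def
proof (intro CollectI conjI ballI impI)
  have "x M \<in> carrier (G Mod M)" if M: "M \<in> sol_quots G" for M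
  proof -
    obtain a where "a \<in> carrier G" "x M = M #> a" using assms(2)[OF M] by blast
    then show ?thesis unfolding FactGroup_def using rcos_in_rcosets by simp
  qed
  then show "x \<in> (\<Pi>\<^sub>E N\<in>sol_quots G. carrier (G Mod N))"
    using assms(1) by (simp add: PiE_iff)
  fix M N assume MN: "M \<in> sol_quots G" "N \<in> sol_quots G" "M \<subseteq> N"
  obtain a where "a \<in> carrier G" "x M = M #> a" "\<forall>N\<in>sol_quots G. M \<subseteq> N \<longrightarrow> x N = N #> a"
    using assms(2)[OF MN(1)] by blast
  then show "x M \<subseteq> x N" using MN rcos_mono by simp
qed

lemma canon_carrier: "g \<in> carrier G \<Longrightarrow> PS_canon G g \<in> PS_carrier G"
  unfolding PS_canon_def
proof (rule PS_carrierI)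
  fix M assume "g \<in> carrier G" "M \<in> sol_quots G"
  then show "\<exists>a\<in>carrier G. (\<lambda>N\<in>sol_quots G. N #> g) M = M #> a \<and>
     (\<forall>N\<in>sol_quots G. M \<subseteq> N \<longrightarrow> (\<lambda>N\<in>sol_quots G. N #> g) N = N #> a)"
    by (intro bexI[of _ g]) simp_all
qed simp

lemma PS_subgroup: "subgroup (PS_carrier G) PG"
proof (rule group.subgroupI[OF PG_group])
  show "PS_carrier G \<subseteq> carrier PG" by (simp add: PS_carrier_def)
  show "PS_carrier G \<noteq> {}" using canon_carrier[OF one_closed] by blast
next
  fix x assume x: "x \<in> PS_carrier G"
  have xP: "x \<in> (\<Pi>\<^sub>E i\<in>sol_quots G. carrier (G Mod i))"
    using x by (simp add: PS_carrier_def)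
  have "inv\<^bsub>PG\<^esub> x = (\<lambda>i\<in>sol_quots G. inv\<^bsub>G Mod i\<^esub> x i)"
    by (rule inv_product_group[OF xP]) (simp add: sol_normal normal.factorgroup_is_group)
  also have "\<dots> = (\<lambda>i\<in>sol_quots G. set_inv (x i))"
  proof (rule restrict_ext)
    fix i assume i: "i \<in> sol_quots G"
    then have "x i \<in> carrier (G Mod i)" using xP by (simp add: PiE_iff)
    then show "inv\<^bsub>G Mod i\<^esub> x i = set_inv (x i)"
      using normal.inv_FactGroup[OF sol_normal[OF i]] by blast
  qed
  finally have e: "inv\<^bsub>PG\<^esub> x = (\<lambda>i\<in>sol_quots G. set_inv (x i))" .
  show "inv\<^bsub>PG\<^esub> x \<in> PS_carrier G"
    unfolding e
  proof (rule PS_carrierI)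
    fix M assume M: "M \<in> sol_quots G"
    obtain a where a: "a \<in> carrier G" "x M = M #> a" using PS_rep[OF x M] by blast
    have "set_inv (x N) = N #> inv a" if "N \<in> sol_quots G" "M \<subseteq> N" for N
    proof -
      have "x N = N #> a" by (rule PS_carrier_transfer[OF x M that a(2) a(1)])
      then show ?thesis using normal.rcos_inv[OF sol_normal[OF that(1)] a(1)] by simp
    qed
    then show "\<exists>a\<in>carrier G. (\<lambda>i\<in>sol_quots G. set_inv (x i)) M = M #> a \<and>
         (\<forall>N\<in>sol_quots G. M \<subseteq> N \<longrightarrow> (\<lambda>i\<in>sol_quots G. set_inv (x i)) N = N #> a)"
      using M a(1) by (intro bexI[of _ "inv a"]) simp_all
  qed simp
next
  fix x y assume x: "x \<in> PS_carrier G" and y: "y \<in> PS_carrier G"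
  show "x \<otimes>\<^bsub>PG\<^esub> y \<in> PS_carrier G"
  proof (rule PS_carrierI)
    fix M assume M: "M \<in> sol_quots G"
    obtain a where a: "a \<in> carrier G" "x M = M #> a" using PS_rep[OF x M] by blast
    obtain b where b: "b \<in> carrier G" "y M = M #> b" using PS_rep[OF y M] by blast
    have "(x \<otimes>\<^bsub>PG\<^esub> y) N = N #> (a \<otimes> b)" if "N \<in> sol_quots G" "M \<subseteq> N" for N
    proof -
      have "x N = N #> a" by (rule PS_carrier_transfer[OF x M that a(2) a(1)])
      moreover have "y N = N #> b" by (rule PS_carrier_transfer[OF y M that b(2) b(1)])
      ultimately show ?thesis
        using that(1) normal.rcos_sum[OF sol_normal[OF that(1)] a(1) b(1)] by (simp add: FactGroup_def)
    qed
    then show "\<exists>c\<in>carrier G. (x \<otimes>\<^bsub>PG\<^esub> y) M = M #> c \<and>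
         (\<forall>N\<in>sol_quots G. M \<subseteq> N \<longrightarrow> (x \<otimes>\<^bsub>PG\<^esub> y) N = N #> c)"
      using M a(1) b(1) by (intro bexI[of _ "a \<otimes> b"]) simp_all
  qed simp
qed

lemma PS_group: "group (PS G)"
  unfolding PS_eq using group.subgroup_imp_group[OF PG_group PS_subgroup] .

lemma proj_inv: "x \<in> PS_carrier G \<Longrightarrow> N \<in> sol_quots G \<Longrightarrow>
  (inv\<^bsub>PS G\<^esub> x) N = set_inv (x N)"
proof -
  assume x: "x \<in> PS_carrier G" and N: "N \<in> sol_quots G"
  have "inv\<^bsub>PS G\<^esub> x = inv\<^bsub>PG\<^esub> x"
    unfolding PS_eq using group.m_inv_consistent[OF PG_group PS_subgroup x] .
  also have "\<dots> = (\<lambda>i\<in>sol_quots G. inv\<^bsub>G Mod i\<^esub> x i)"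
    by (rule inv_product_group) (use x in \<open>simp_all add: PS_carrier_def sol_normal normal.factorgroup_is_group\<close>)
  finally have "(inv\<^bsub>PS G\<^esub> x) N = inv\<^bsub>G Mod N\<^esub> x N" using N by simp
  moreover have "x N \<in> carrier (G Mod N)" using x N by (auto simp: PS_carrier_def)
  ultimately show ?thesis using normal.inv_FactGroup[OF sol_normal[OF N]] by simp
qed

lemma proj_mult: "N \<in> sol_quots G \<Longrightarrow> (x \<otimes>\<^bsub>PS G\<^esub> y) N = x N <#> y N"
  by (simp add: PS_def)

lemma carrier_PS [simp]: "carrier (PS G) = PS_carrier G"
  by (simp add: PS_def)

lemma mult_PS: "x \<otimes>\<^bsub>PS G\<^esub> y = (\<lambda>N\<in>sol_quots G. x N <#> y N)"
  by (simp add: PS_def)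

lemma one_PS: "\<one>\<^bsub>PS G\<^esub> = (\<lambda>N\<in>sol_quots G. N)"
  by (simp add: PS_def)

lemma canon_hom: "PS_canon G \<in> hom G (PS G)"
  unfolding hom_def
proof (intro CollectI conjI ballI)
  show "PS_canon G \<in> carrier G \<rightarrow> carrier (PS G)" using canon_carrier by auto
  fix x y assume "x \<in> carrier G" "y \<in> carrier G"
  then show "PS_canon G (x \<otimes> y) = PS_canon G x \<otimes>\<^bsub>PS G\<^esub> PS_canon G y"
    unfolding mult_PS PS_canon_def
  proof (intro restrict_ext)
    fix N assume "N \<in> sol_quots G"
    then show "N #> x \<otimes> y = (\<lambda>N\<in>sol_quots G. N #> x) N <#> (\<lambda>N\<in>sol_quots G. N #> y) N"
      using normal.rcos_sum[OF sol_normal \<open>x \<in> carrier G\<close> \<open>y \<in> carrier G\<close>] by simp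
  qed
qed

lemma canon_group_hom: "group_hom G (PS G) (PS_canon G)"
  unfolding group_hom_def group_hom_axioms_def using is_group PS_group canon_hom by blast

lemma proj_hom: "N \<in> sol_quots G \<Longrightarrow> (\<lambda>x. x N) \<in> hom (PS G) (G Mod N)"
  unfolding hom_def
proof (intro CollectI conjI ballI)
  assume N: "N \<in> sol_quots G"
  show "(\<lambda>x. x N) \<in> carrier (PS G) \<rightarrow> carrier (G Mod N)"
    using N by (auto simp: PS_carrier_def)
  fix x y assume "x \<in> carrier (PS G)" "y \<in> carrier (PS G)"
  then show "(x \<otimes>\<^bsub>PS G\<^esub> y) N = x N \<otimes>\<^bsub>G Mod N\<^esub> y N"
    using N by (simp add: mult_PS FactGroup_def)
qed

lemma proj_group_hom: "N \<in> sol_quots G \<Longrightarrow> group_hom (PS G) (G Mod N) (\<lambda>x. x N)"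
  unfolding group_hom_def group_hom_axioms_def
  using PS_group proj_hom normal.factorgroup_is_group[OF sol_normal] by blast





abbreviation TD :: "nat \<Rightarrow> ('a set \<Rightarrow> 'a set) set" where
  "TD k \<equiv> top_derived (PS G) (PS_topology G) k"

lemma DD_carrier: "DD k \<subseteq> carrier G"
  by (rule subgroup.subset[OF DD_subgroup])

lemma DD_inv: "a \<in> DD k \<Longrightarrow> inv a \<in> DD k"
  by (rule subgroup.m_inv_closed[OF DD_subgroup])

lemma DD_mult: "a \<in> DD k \<Longrightarrow> b \<in> DD k \<Longrightarrow> a \<otimes> b \<in> DD k"
  by (rule subgroup.m_closed[OF DD_subgroup])

lemma topspace_T [simp]: "topspace (PS_topology G) = PS_carrier G"
  unfolding PS_topology_def by (auto simp: PS_carrier_def)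

lemma TD_sub: "TD k \<subseteq> PS_carrier G"
proof (cases k)
  case (Suc m)
  show ?thesis unfolding Suc top_derived.simps
    using closure_of_subset_topspace[of "PS_topology G"] by simp
qed simp

lemma TD_closed: "closedin (PS_topology G) (TD k)"
proof (cases k)
  case 0
  have "TD k = topspace (PS_topology G)" using 0 by simp
  then show ?thesis using closedin_topspace by metis
qed simp

lemma proj_cont: "N \<in> sol_quots G \<Longrightarrow>
  continuous_map (PS_topology G) (discrete_topology (carrier (G Mod N))) (\<lambda>x. x N)"
  unfolding PS_topology_def
  by (rule continuous_map_from_subtopology) (rule continuous_map_product_projection)

lemma closed_pre: "N \<in> sol_quots G \<Longrightarrow> A \<subseteq> carrier (G Mod N) \<Longrightarrow>
  closedin (PS_topology G) {x \<in> PS_carrier G. x N \<in> A}"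
  using closedin_continuous_map_preimage[OF proj_cont, of N A] by simp

lemma commutators_mono: "A \<subseteq> B \<Longrightarrow> commutators H A \<subseteq> commutators H B"
  unfolding commutators_def by blast

lemma canon_TD: "PS_canon G ` DD k \<subseteq> TD k"
proof (induct k)
  case 0
  then show ?case using canon_carrier by auto
next
  case (Suc k)
  have P: "group (PS G)" by (rule PS_group)
  have c: "group_hom G (PS G) (PS_canon G)" by (rule canon_group_hom)
  have sub: "DD k \<subseteq> carrier G" using DD_carrier by blast
  have "PS_canon G ` derived_set G (DD k) \<subseteq> commutators (PS G) (TD k)"
  proof
    fix z assume "z \<in> PS_canon G ` derived_set G (DD k)"
    then obtain h1 h2 where h: "h1 \<in> DD k" "h2 \<in> DD k"
      and z: "z = PS_canon G (h1 \<otimes> h2 \<otimes> inv h1 \<otimes> inv h2)" by blast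
    have hc: "h1 \<in> carrier G" "h2 \<in> carrier G" using h sub by blast+
    have hi: "inv h1 \<in> DD k" "inv h2 \<in> DD k" using DD_inv h by simp_all
    define A where "A = PS_canon G (inv h1)"
    define B where "B = PS_canon G (inv h2)"
    have AB: "A \<in> TD k" "B \<in> TD k" using hi Suc unfolding A_def B_def by blast+
    have iA: "inv\<^bsub>PS G\<^esub> A = PS_canon G h1"
      unfolding A_def using group_hom.hom_inv[OF c inv_closed[OF hc(1)]] hc(1) by simp
    have iB: "inv\<^bsub>PS G\<^esub> B = PS_canon G h2"
      unfolding B_def using group_hom.hom_inv[OF c inv_closed[OF hc(2)]] hc(2) by simp
    have m: "PS_canon G (p \<otimes> q) = PS_canon G p \<otimes>\<^bsub>PS G\<^esub> PS_canon G q"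
      if "p \<in> carrier G" "q \<in> carrier G" for p q
      using group_hom.hom_mult[OF c that] .
    have "z = PS_canon G h1 \<otimes>\<^bsub>PS G\<^esub> PS_canon G h2 \<otimes>\<^bsub>PS G\<^esub> A \<otimes>\<^bsub>PS G\<^esub> B"
      unfolding z A_def B_def using hc by (simp add: m)
    then have "z = inv\<^bsub>PS G\<^esub> A \<otimes>\<^bsub>PS G\<^esub> inv\<^bsub>PS G\<^esub> B \<otimes>\<^bsub>PS G\<^esub> A \<otimes>\<^bsub>PS G\<^esub> B"
      by (simp only: iA iB)
    then show "z \<in> commutators (PS G) (TD k)" unfolding commutators_def using AB by blast
  qed
  then have "generate (PS G) (PS_canon G ` derived_set G (DD k)) \<subseteq> generate (PS G) (commutators (PS G) (TD k))"
    by (rule group.mono_generate[OF P])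
  moreover have "PS_canon G ` DD (Suc k) = generate (PS G) (PS_canon G ` derived_set G (DD k))"
    using group_hom.generate_img[OF c derived_set_in_carrier[OF sub]] by (simp add: derived_def)
  moreover have "generate (PS G) (commutators (PS G) (TD k)) \<subseteq> TD (Suc k)"
  proof -
    have "commutators (PS G) (TD k) \<subseteq> carrier (PS G)"
      using TD_sub[of k] unfolding commutators_def by (auto intro!: group.inv_closed[OF P, simplified] monoid.m_closed[OF group.is_monoid[OF P], simplified])
    then have "generate (PS G) (commutators (PS G) (TD k)) \<subseteq> topspace (PS_topology G)"
      using group.generate_incl[OF P] by simp
    then show ?thesis by (simp add: closure_of_subset)
  qed
  ultimately show ?case by blast
qed

lemma coset_sub_iff:
  assumes "N \<subseteq> S" "subgroup S G" "subgroup N G" "a \<in> carrier G"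
  shows "N #> a \<subseteq> S \<longleftrightarrow> a \<in> S"
proof
  assume "N #> a \<subseteq> S" then show "a \<in> S" using rcos_self[OF assms(4,3)] by blast
next
  assume "a \<in> S" then show "N #> a \<subseteq> S"
    using assms(1,2) unfolding r_coset_def by (auto intro: subgroup.m_closed)
qed

definition PP :: "nat \<Rightarrow> nat \<Rightarrow> ('a set \<Rightarrow> 'a set) set" where
  "PP n j = {x \<in> PS_carrier G. x (DD n) \<subseteq> DD j}"

lemma PP_rep:
  assumes "x \<in> PS_carrier G" "j \<le> n"
  shows "x \<in> PP n j \<longleftrightarrow> (\<exists>a\<in>DD j. x (DD n) = DD n #> a)"
proof -
  obtain a where a: "a \<in> carrier G" "x (DD n) = DD n #> a" using PS_rep[OF assms(1) DD_sol] by blast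
  have "x (DD n) \<subseteq> DD j \<longleftrightarrow> a \<in> DD j"
    unfolding a(2) by (rule coset_sub_iff[OF DD_antimono[OF assms(2)] DD_subgroup DD_subgroup a(1)])
  moreover have "(\<exists>b\<in>DD j. x (DD n) = DD n #> b) \<longleftrightarrow> a \<in> DD j"
  proof
    assume "\<exists>b\<in>DD j. x (DD n) = DD n #> b"
    then obtain b where b: "b \<in> DD j" "x (DD n) = DD n #> b" by blast
    then have "b \<in> carrier G" using DD_carrier by blast
    then have "a \<in> DD n #> b" using a b rcos_self[OF a(1) DD_subgroup] by simp
    then show "a \<in> DD j"
      using coset_sub_iff[OF DD_antimono[OF assms(2)] DD_subgroup DD_subgroup \<open>b \<in> carrier G\<close>] b by blast
  qed (use a in blast)
  ultimately show ?thesis using assms(1) by (simp add: PP_def)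
qed

lemma PP_closed: "closedin (PS_topology G) (PP n j)"
proof -
  have "PP n j = {x \<in> PS_carrier G. x (DD n) \<in> {Z \<in> carrier (G Mod DD n). Z \<subseteq> DD j}}"
    unfolding PP_def using proj_hom[OF DD_sol, of n] by (auto simp: hom_def)
  moreover have "closedin (PS_topology G) {x \<in> PS_carrier G. x (DD n) \<in> {Z \<in> carrier (G Mod DD n). Z \<subseteq> DD j}}"
    by (rule closed_pre[OF DD_sol]) blast
  ultimately show ?thesis by simp
qed

lemma PP_subgroup: "j \<le> n \<Longrightarrow> subgroup (PP n j) (PS G)"
proof -
  assume jn: "j \<le> n"
  interpret P: group "PS G" by (rule PS_group)
  interpret pr: group_hom "PS G" "G Mod DD n" "\<lambda>x. x (DD n)" by (rule proj_group_hom[OF DD_sol])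
  interpret N: normal "DD n" G by (rule DD_normal)
  have jsub: "DD j \<subseteq> carrier G" using DD_carrier by blast
  show ?thesis
  proof (rule P.subgroupI)
    show "PP n j \<subseteq> carrier (PS G)" by (auto simp: PP_def)
    have "\<one>\<^bsub>PS G\<^esub> \<in> PP n j"
      unfolding PP_def using DD_sol[of n] DD_antimono[OF jn] P.one_closed by (simp add: one_PS)
    then show "PP n j \<noteq> {}" by blast
  next
    fix x assume x: "x \<in> PP n j"
    then have xc: "x \<in> PS_carrier G" by (simp add: PP_def)
    obtain a where a: "a \<in> DD j" "x (DD n) = DD n #> a" using PP_rep[OF xc jn] x by blast
    have ac: "a \<in> carrier G" using a jsub by blast
    have "(inv\<^bsub>PS G\<^esub> x) (DD n) = inv\<^bsub>G Mod DD n\<^esub> (x (DD n))" using xc by (simp add: pr.hom_inv)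
    also have "\<dots> = DD n #> inv a"
      using a ac N.inv_FactGroup[of "DD n #> a"] N.rcos_inv[OF ac] by (simp add: FactGroup_def rcos_in_rcosets)
    finally have "(inv\<^bsub>PS G\<^esub> x) (DD n) = DD n #> inv a" .
    moreover have "inv a \<in> DD j" using DD_inv a(1) .
    moreover have "inv\<^bsub>PS G\<^esub> x \<in> PS_carrier G" using xc by (metis P.inv_closed carrier_PS)
    ultimately show "inv\<^bsub>PS G\<^esub> x \<in> PP n j" using PP_rep[OF _ jn] by blast
  next
    fix x y assume x: "x \<in> PP n j" and y: "y \<in> PP n j"
    then have xc: "x \<in> PS_carrier G" and yc: "y \<in> PS_carrier G" by (simp_all add: PP_def)
    obtain a where a: "a \<in> DD j" "x (DD n) = DD n #> a" using PP_rep[OF xc jn] x by blast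
    obtain b where b: "b \<in> DD j" "y (DD n) = DD n #> b" using PP_rep[OF yc jn] y by blast
    have ac: "a \<in> carrier G" "b \<in> carrier G" using a b jsub by blast+
    have "(x \<otimes>\<^bsub>PS G\<^esub> y) (DD n) = DD n #> (a \<otimes> b)"
      using a b DD_sol[of n] N.rcos_sum[OF ac] by (simp add: mult_PS)
    moreover have "a \<otimes> b \<in> DD j" using DD_mult a(1) b(1) .
    moreover have "x \<otimes>\<^bsub>PS G\<^esub> y \<in> PS_carrier G" using xc yc by (metis P.m_closed carrier_PS)
    ultimately show "x \<otimes>\<^bsub>PS G\<^esub> y \<in> PP n j" using PP_rep[OF _ jn] by blast
  qed
qed

lemma comm_PP: "Suc k \<le> n \<Longrightarrow> commutators (PS G) (PP n k) \<subseteq> PP n (Suc k)"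
proof
  fix z assume kn: "Suc k \<le> n" and z: "z \<in> commutators (PS G) (PP n k)"
  interpret P: group "PS G" by (rule PS_group)
  interpret N: normal "DD n" G by (rule DD_normal)
  have "\<exists>x y. z = inv\<^bsub>PS G\<^esub> x \<otimes>\<^bsub>PS G\<^esub> inv\<^bsub>PS G\<^esub> y \<otimes>\<^bsub>PS G\<^esub> x \<otimes>\<^bsub>PS G\<^esub> y \<and> x \<in> PP n k \<and> y \<in> PP n k"
    using z unfolding commutators_def by (rule CollectD)
  then obtain x y where xy: "x \<in> PP n k" "y \<in> PP n k"
    and z: "z = inv\<^bsub>PS G\<^esub> x \<otimes>\<^bsub>PS G\<^esub> inv\<^bsub>PS G\<^esub> y \<otimes>\<^bsub>PS G\<^esub> x \<otimes>\<^bsub>PS G\<^esub> y"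
    by (elim exE conjE)
  have kn': "k \<le> n" using kn by simp
  have xc: "x \<in> PS_carrier G" and yc: "y \<in> PS_carrier G" using xy by (simp_all add: PP_def)
  have "\<exists>a\<in>DD k. x (DD n) = DD n #> a" using PP_rep[OF xc kn'] xy(1) by (rule iffD1)
  then obtain a where a: "a \<in> DD k" "x (DD n) = DD n #> a" by (elim bexE)
  have "\<exists>b\<in>DD k. y (DD n) = DD n #> b" using PP_rep[OF yc kn'] xy(2) by (rule iffD1)
  then obtain b where b: "b \<in> DD k" "y (DD n) = DD n #> b" by (elim bexE)
  have ksub: "DD k \<subseteq> carrier G" using DD_carrier by blast
  have ac: "a \<in> carrier G" "b \<in> carrier G" using a b ksub by blast+
  define c where "c = inv a \<otimes> inv b \<otimes> a \<otimes> b"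
  have N0: "DD n \<in> sol_quots G" by (rule DD_sol)
  have ix: "(inv\<^bsub>PS G\<^esub> x) (DD n) = DD n #> inv a"
  proof -
    have "(inv\<^bsub>PS G\<^esub> x) (DD n) = set_inv (x (DD n))" by (rule proj_inv[OF xc N0])
    also have "\<dots> = set_inv (DD n #> a)" by (simp only: a(2))
    also have "\<dots> = DD n #> inv a" by (rule N.rcos_inv[OF ac(1)])
    finally show ?thesis .
  qed
  have iy: "(inv\<^bsub>PS G\<^esub> y) (DD n) = DD n #> inv b"
  proof -
    have "(inv\<^bsub>PS G\<^esub> y) (DD n) = set_inv (y (DD n))" by (rule proj_inv[OF yc N0])
    also have "\<dots> = set_inv (DD n #> b)" by (simp only: b(2))
    also have "\<dots> = DD n #> inv b" by (rule N.rcos_inv[OF ac(2)])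
    finally show ?thesis .
  qed
  have "z (DD n) = (DD n #> inv a) <#> (DD n #> inv b) <#> (DD n #> a) <#> (DD n #> b)"
    unfolding z by (simp only: proj_mult[OF N0] ix iy a(2) b(2))
  also have "\<dots> = DD n #> c"
    unfolding c_def using ac by (simp only: N.rcos_sum inv_closed m_closed)
  finally have zc: "z (DD n) = DD n #> c" .
  have cD: "c \<in> DD (Suc k)"
  proof -
    have ia: "inv a \<in> DD k" "inv b \<in> DD k" using DD_inv a(1) b(1) by simp_all
    have "c = inv a \<otimes> inv b \<otimes> inv (inv a) \<otimes> inv (inv b)" using ac by (simp add: c_def)
    then have "c \<in> derived_set G (DD k)"
      by (intro UN_I[OF ia(1)] UN_I[OF ia(2)]) simp
    then have "c \<in> derived G (DD k)" unfolding derived_def by (rule generate.incl)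
    then show ?thesis by simp
  qed
  have xc': "x \<in> carrier (PS G)" "y \<in> carrier (PS G)" using xc yc by simp_all
  have "z \<in> carrier (PS G)" unfolding z using xc' by (intro P.m_closed P.inv_closed)
  then have "z \<in> PS_carrier G" by simp
  then show "z \<in> PP n (Suc k)" using PP_rep[OF _ kn] zc cD by (intro iffD2[OF PP_rep[OF _ kn]] bexI)
qed

lemma TD_PP: "k \<le> n \<Longrightarrow> TD k \<subseteq> PP n k"
proof (induct k)
  case 0
  have "x (DD n) \<subseteq> carrier G" if x: "x \<in> PS_carrier G" for x
  proof -
    obtain a where "a \<in> carrier G" "x (DD n) = DD n #> a" using PS_rep[OF x DD_sol] by blast
    then show ?thesis using r_coset_subset_G[OF subgroup.subset[OF DD_subgroup]] by simp
  qed
  then show ?case by (auto simp: PP_def)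
next
  case (Suc k)
  interpret P: group "PS G" by (rule PS_group)
  have kn: "k \<le> n" using Suc(2) by simp
  have IH: "TD k \<subseteq> PP n k" using Suc(1)[OF kn] .
  have c1: "commutators (PS G) (TD k) \<subseteq> commutators (PS G) (PP n k)" by (rule commutators_mono[OF IH])
  have c2: "commutators (PS G) (TD k) \<subseteq> PP n (Suc k)" using c1 comm_PP[OF Suc(2)] by (rule order_trans)
  have g: "generate (PS G) (commutators (PS G) (TD k)) \<subseteq> PP n (Suc k)"
    by (rule P.generate_subgroup_incl[OF c2 PP_subgroup[OF Suc(2)]])
  have "PS_topology G closure_of generate (PS G) (commutators (PS G) (TD k)) \<subseteq> PP n (Suc k)"
    by (rule closure_of_minimal[OF g PP_closed])
  then show ?case by simp
qed


definition KK :: "nat \<Rightarrow> ('a set \<Rightarrow> 'a set) set" where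
  "KK n = {x \<in> PS_carrier G. x (DD n) = DD n}"

lemma KK_kernel: "KK n = kernel (PS G) (G Mod DD n) (\<lambda>x. x (DD n))"
  by (auto simp: KK_def kernel_def FactGroup_def)

lemma KK_normal: "KK n \<lhd> PS G"
  unfolding KK_kernel by (rule group_hom.normal_kernel[OF proj_group_hom[OF DD_sol]])

lemma rcos_eq_iff:
  assumes "subgroup H G" "x \<in> carrier G" "y \<in> carrier G"
  shows "H #> x = H #> y \<longleftrightarrow> x \<otimes> inv y \<in> H"
proof
  have Hs: "H \<subseteq> carrier G" using subgroup.subset[OF assms(1)] .
  assume "H #> x = H #> y"
  then have "H #> (x \<otimes> inv y) = H" using coset_mult_inv2[OF _ assms(2,3) Hs] by blast
  moreover have "x \<otimes> inv y \<in> H #> (x \<otimes> inv y)" using rcos_self[OF _ assms(1)] assms(2,3) by simp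
  ultimately show "x \<otimes> inv y \<in> H" by simp
next
  have Hs: "H \<subseteq> carrier G" using subgroup.subset[OF assms(1)] .
  assume "x \<otimes> inv y \<in> H"
  then have "H #> (x \<otimes> inv y) = H" using coset_join2[OF _ assms(1)] assms(2,3) by simp
  then show "H #> x = H #> y" using coset_mult_inv1[OF _ assms(2,3) Hs] by blast
qed

lemma canon_KK: "g \<in> carrier G \<Longrightarrow> PS_canon G g \<in> KK n \<longleftrightarrow> g \<in> DD n"
proof -
  assume g: "g \<in> carrier G"
  have "PS_canon G g \<in> KK n \<longleftrightarrow> DD n #> g = DD n"
    using g canon_carrier DD_sol[of n] by (simp add: KK_def PS_canon_def)
  also have "\<dots> \<longleftrightarrow> g \<in> DD n"
  proof
    assume "DD n #> g = DD n" then show "g \<in> DD n" using rcos_self[OF g DD_subgroup[of n]] by simp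
  next
    assume "g \<in> DD n" then show "DD n #> g = DD n" using coset_join2[OF g DD_subgroup[of n]] by simp
  qed
  finally show ?thesis .
qed

lemma TD_sub_KK: "TD n \<subseteq> KK n"
proof
  fix x assume "x \<in> TD n"
  then have x: "x \<in> PP n n" using TD_PP[of n n] by blast
  then have xc: "x \<in> PS_carrier G" by (simp add: PP_def)
  have "\<exists>a\<in>DD n. x (DD n) = DD n #> a" using PP_rep[OF xc order_refl] x by (rule iffD1)
  then obtain a where a: "a \<in> DD n" "x (DD n) = DD n #> a" by (elim bexE)
  have "DD n #> a = DD n" using subgroup.rcos_const[OF DD_subgroup is_group a(1)] .
  then show "x \<in> KK n" using xc a(2) by (simp add: KK_def)
qed

lemma KK_closure: "KK n \<subseteq> PS_topology G closure_of (PS_canon G ` DD n)"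
proof
  fix x assume xK: "x \<in> KK n"
  then have xc: "x \<in> PS_carrier G" and x0: "x (DD n) = DD n" by (simp_all add: KK_def)
  show "x \<in> PS_topology G closure_of (PS_canon G ` DD n)"
    unfolding in_closure_of
  proof (intro conjI allI impI)
    show "x \<in> topspace (PS_topology G)" using xc by simp
    fix U assume U: "x \<in> U \<and> openin (PS_topology G) U"
    then obtain V where V: "openin (product_topology (\<lambda>N. discrete_topology (carrier (G Mod N))) (sol_quots G)) V"
      "U = V \<inter> PS_carrier G"
      unfolding PS_topology_def openin_subtopology by blast
    have "x \<in> V" using U V by blast
    have "\<exists>W. finite {i \<in> sol_quots G. W i \<noteq> topspace (discrete_topology (carrier (G Mod i)))} \<and>
      (\<forall>i\<in>sol_quots G. openin (discrete_topology (carrier (G Mod i))) (W i)) \<and>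
      x \<in> Pi\<^sub>E (sol_quots G) W \<and> Pi\<^sub>E (sol_quots G) W \<subseteq> V"
      using iffD1[OF openin_product_topology_alt V(1)] \<open>x \<in> V\<close> by (rule bspec)
    then obtain W where W: "finite {i \<in> sol_quots G. W i \<noteq> topspace (discrete_topology (carrier (G Mod i)))}"
      "x \<in> Pi\<^sub>E (sol_quots G) W" "Pi\<^sub>E (sol_quots G) W \<subseteq> V"
      by blast
    define F where "F = {i \<in> sol_quots G. W i \<noteq> carrier (G Mod i)}"
    have Ffin: "finite F" using W(1) by (simp add: F_def)
    have "\<forall>N\<in>F. \<exists>k. DD k \<subseteq> N"
    proof
      fix N assume "N \<in> F"
      then have "N \<in> sol_quots G" by (simp add: F_def)
      then show "\<exists>k. DD k \<subseteq> N" by (simp add: sol_quots_iff)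
    qed
    from bchoice[OF this] obtain kf where kf: "\<forall>N\<in>F. DD (kf N) \<subseteq> N" ..
    define K where "K = n + sum kf F"
    have MF: "DD K \<subseteq> N" if N: "N \<in> F" for N
    proof -
      have "kf N \<le> sum kf F" by (rule member_le_sum[OF N _ Ffin]) simp
      then have "kf N \<le> K" by (simp add: K_def)
      then have "DD K \<subseteq> DD (kf N)" by (rule DD_antimono)
      moreover have "DD (kf N) \<subseteq> N" using kf N by (rule bspec)
      ultimately show ?thesis by (rule order_trans)
    qed
    have Mn: "DD K \<subseteq> DD n" by (rule DD_antimono) (simp add: K_def)
    obtain g where g: "g \<in> carrier G" "x (DD K) = DD K #> g" using PS_rep[OF xc DD_sol] by blast
    have xN: "x N = N #> g" if "N \<in> sol_quots G" "DD K \<subseteq> N" for N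
      by (rule PS_carrier_transfer[OF xc DD_sol that g(2) g(1)])
    have "DD n #> g = DD n" using xN[OF DD_sol Mn] x0 by simp
    then have gn: "g \<in> DD n" using rcos_self[OF g(1) DD_subgroup[of n]] by simp
    have yc: "PS_canon G g \<in> PS_carrier G" by (rule canon_carrier[OF g(1)])
    have "PS_canon G g \<in> Pi\<^sub>E (sol_quots G) W"
      unfolding PiE_iff
    proof (intro conjI ballI)
      fix i assume i: "i \<in> sol_quots G"
      show "PS_canon G g i \<in> W i"
      proof (cases "i \<in> F")
        case True
        then have "x i = i #> g" using xN[OF i MF] by simp
        moreover have "x i \<in> W i" using W(2) i by (simp add: PiE_iff)
        ultimately show ?thesis using i by (simp add: PS_canon_def)
      next
        case False
        then have "W i = carrier (G Mod i)" using i by (simp add: F_def)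
        then show ?thesis using i g(1) by (simp add: PS_canon_def FactGroup_def rcos_in_rcosets)
      qed
    qed (simp add: PS_canon_def)
    then have "PS_canon G g \<in> U" using W(3) V(2) yc by blast
    then show "\<exists>y. y \<in> PS_canon G ` DD n \<and> y \<in> U" using gn by blast
  qed
qed

lemma KK_sub_TD: "KK n \<subseteq> TD n"
  using KK_closure closure_of_minimal[OF canon_TD TD_closed] by blast

lemma TD_eq: "TD n = KK n"
  using TD_sub_KK KK_sub_TD by blast


lemma canon_mult: "a \<in> carrier G \<Longrightarrow> b \<in> carrier G \<Longrightarrow>
  PS_canon G (a \<otimes> b) = PS_canon G a \<otimes>\<^bsub>PS G\<^esub> PS_canon G b"
  by (rule group_hom.hom_mult[OF canon_group_hom])

lemma canon_inv: "a \<in> carrier G \<Longrightarrow> PS_canon G (inv a) = inv\<^bsub>PS G\<^esub> PS_canon G a"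
  by (rule group_hom.hom_inv[OF canon_group_hom])

lemma KK_coset_eq:
  assumes "a \<in> carrier G" "b \<in> carrier G"
  shows "KK n #>\<^bsub>PS G\<^esub> PS_canon G a = KK n #>\<^bsub>PS G\<^esub> PS_canon G b \<longleftrightarrow> a \<otimes> inv b \<in> DD n"
proof -
  have P: "group (PS G)" by (rule PS_group)
  have sK: "subgroup (KK n) (PS G)" using KK_normal normal_imp_subgroup by blast
  have ca: "PS_canon G a \<in> carrier (PS G)" "PS_canon G b \<in> carrier (PS G)"
    using canon_carrier assms by simp_all
  have "KK n #>\<^bsub>PS G\<^esub> PS_canon G a = KK n #>\<^bsub>PS G\<^esub> PS_canon G b \<longleftrightarrow>
      PS_canon G a \<otimes>\<^bsub>PS G\<^esub> inv\<^bsub>PS G\<^esub> PS_canon G b \<in> KK n"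
    by (rule group.rcos_eq_iff[OF P sK ca])
  also have "PS_canon G a \<otimes>\<^bsub>PS G\<^esub> inv\<^bsub>PS G\<^esub> PS_canon G b = PS_canon G (a \<otimes> inv b)"
    using assms by (simp only: canon_mult canon_inv inv_closed)
  also have "PS_canon G (a \<otimes> inv b) \<in> KK n \<longleftrightarrow> a \<otimes> inv b \<in> DD n"
    using assms by (simp add: canon_KK)
  finally show ?thesis .
qed

lemma main_iso:
  "(\<lambda>C. the_elem ((\<lambda>g. r_coset (PS G) (TD n) (PS_canon G g)) ` C))
     \<in> iso (G Mod DD n) (PS G Mod TD n)"
proof -
  have P: "group (PS G)" by (rule PS_group)
  have Kn: "KK n \<lhd> PS G" by (rule KK_normal)
  have sK: "subgroup (KK n) (PS G)" using Kn normal_imp_subgroup by blast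
  have Nn: "DD n \<lhd> G" by (rule DD_normal)
  define f where "f = (\<lambda>C. the_elem ((\<lambda>g. KK n #>\<^bsub>PS G\<^esub> PS_canon G g) ` C))"
  have fval: "f (DD n #> h) = KK n #>\<^bsub>PS G\<^esub> PS_canon G h" if h: "h \<in> carrier G" for h
  proof -
    have "(\<lambda>g. KK n #>\<^bsub>PS G\<^esub> PS_canon G g) ` (DD n #> h) = {KK n #>\<^bsub>PS G\<^esub> PS_canon G h}"
    proof (intro equalityI subsetI)
      fix Y assume "Y \<in> (\<lambda>g. KK n #>\<^bsub>PS G\<^esub> PS_canon G g) ` (DD n #> h)"
      then obtain g where g: "g \<in> DD n #> h" "Y = KK n #>\<^bsub>PS G\<^esub> PS_canon G g" by blast
      have gc: "g \<in> carrier G" using g(1) r_coset_subset_G[OF DD_carrier h] by blast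
      have "g \<otimes> inv h \<in> DD n" using subgroup.rcos_module_imp[OF DD_subgroup is_group h g(1)] .
      then show "Y \<in> {KK n #>\<^bsub>PS G\<^esub> PS_canon G h}" using g(2) KK_coset_eq[OF gc h] by simp
    next
      fix Y assume "Y \<in> {KK n #>\<^bsub>PS G\<^esub> PS_canon G h}"
      moreover have "h \<in> DD n #> h" by (rule rcos_self[OF h DD_subgroup])
      ultimately show "Y \<in> (\<lambda>g. KK n #>\<^bsub>PS G\<^esub> PS_canon G g) ` (DD n #> h)" by blast
    qed
    then show ?thesis unfolding f_def by simp
  qed
  have carG: "carrier (G Mod DD n) = {DD n #> h | h. h \<in> carrier G}"
    by (auto simp: FactGroup_def RCOSETS_def)
  have carP: "carrier (PS G Mod KK n) = {KK n #>\<^bsub>PS G\<^esub> x | x. x \<in> PS_carrier G}"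
    by (auto simp: FactGroup_def RCOSETS_def)
  have hom: "f \<in> hom (G Mod DD n) (PS G Mod KK n)"
    unfolding hom_def
  proof (intro CollectI conjI ballI)
    show "f \<in> carrier (G Mod DD n) \<rightarrow> carrier (PS G Mod KK n)"
      unfolding carG carP using fval canon_carrier by blast
    fix C1 C2 assume C: "C1 \<in> carrier (G Mod DD n)" "C2 \<in> carrier (G Mod DD n)"
    then obtain h1 h2 where h: "h1 \<in> carrier G" "h2 \<in> carrier G" "C1 = DD n #> h1" "C2 = DD n #> h2"
      unfolding carG by blast
    have ch: "PS_canon G h1 \<in> carrier (PS G)" "PS_canon G h2 \<in> carrier (PS G)"
      using canon_carrier h by simp_all
    have "C1 \<otimes>\<^bsub>G Mod DD n\<^esub> C2 = DD n #> (h1 \<otimes> h2)"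
      using normal.rcos_sum[OF Nn h(1,2)] h by (simp add: FactGroup_def)
    then have "f (C1 \<otimes>\<^bsub>G Mod DD n\<^esub> C2) = KK n #>\<^bsub>PS G\<^esub> PS_canon G (h1 \<otimes> h2)"
      using fval h by simp
    also have "\<dots> = KK n #>\<^bsub>PS G\<^esub> (PS_canon G h1 \<otimes>\<^bsub>PS G\<^esub> PS_canon G h2)"
      using canon_mult[OF h(1,2)] by simp
    also have "\<dots> = (KK n #>\<^bsub>PS G\<^esub> PS_canon G h1) <#>\<^bsub>PS G\<^esub> (KK n #>\<^bsub>PS G\<^esub> PS_canon G h2)"
      using normal.rcos_sum[OF Kn ch] by simp
    also have "\<dots> = f C1 \<otimes>\<^bsub>PS G Mod KK n\<^esub> f C2"
      using fval h by (simp add: FactGroup_def)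
    finally show "f (C1 \<otimes>\<^bsub>G Mod DD n\<^esub> C2) = f C1 \<otimes>\<^bsub>PS G Mod KK n\<^esub> f C2" .
  qed
  have inj: "inj_on f (carrier (G Mod DD n))"
  proof (rule inj_onI)
    fix C1 C2 assume C: "C1 \<in> carrier (G Mod DD n)" "C2 \<in> carrier (G Mod DD n)" and e: "f C1 = f C2"
    then obtain h1 h2 where h: "h1 \<in> carrier G" "h2 \<in> carrier G" "C1 = DD n #> h1" "C2 = DD n #> h2"
      unfolding carG by blast
    have "h1 \<otimes> inv h2 \<in> DD n" using e fval h KK_coset_eq[OF h(1,2)] by simp
    then show "C1 = C2" using rcos_eq_iff[OF DD_subgroup h(1,2)] h by simp
  qed
  have surj: "f ` carrier (G Mod DD n) = carrier (PS G Mod KK n)"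
  proof (intro equalityI subsetI)
    fix Y assume "Y \<in> f ` carrier (G Mod DD n)"
    then show "Y \<in> carrier (PS G Mod KK n)" using hom unfolding hom_def by blast
  next
    fix Y assume "Y \<in> carrier (PS G Mod KK n)"
    then obtain x where x: "x \<in> PS_carrier G" "Y = KK n #>\<^bsub>PS G\<^esub> x" unfolding carP by blast
    obtain g where g: "g \<in> carrier G" "x (DD n) = DD n #> g" using PS_rep[OF x(1) DD_sol] by blast
    have cg: "PS_canon G g \<in> carrier (PS G)" using canon_carrier g by simp
    have xc: "x \<in> carrier (PS G)" using x by simp
    have ixc: "inv\<^bsub>PS G\<^esub> x \<in> PS_carrier G" using group.inv_closed[OF P xc] by simp
    have N0: "DD n \<in> sol_quots G" by (rule DD_sol)
    have "(PS_canon G g \<otimes>\<^bsub>PS G\<^esub> inv\<^bsub>PS G\<^esub> x) (DD n) = (DD n #> g) <#> set_inv (DD n #> g)"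
      using proj_mult[OF N0] proj_inv[OF x(1) N0] g(2) N0 by (simp add: PS_canon_def)
    also have "\<dots> = (DD n #> g) <#> (DD n #> inv g)" using normal.rcos_inv[OF Nn g(1)] by simp
    also have "\<dots> = DD n #> (g \<otimes> inv g)" using normal.rcos_sum[OF Nn g(1) inv_closed[OF g(1)]] by simp
    also have "\<dots> = DD n" using g(1) DD_carrier by simp
    finally have "PS_canon G g \<otimes>\<^bsub>PS G\<^esub> inv\<^bsub>PS G\<^esub> x \<in> KK n"
      using monoid.m_closed[OF group.is_monoid[OF P] cg group.inv_closed[OF P xc]] by (simp add: KK_def)
    then have "KK n #>\<^bsub>PS G\<^esub> PS_canon G g = KK n #>\<^bsub>PS G\<^esub> x"
      using group.rcos_eq_iff[OF P sK cg xc] by simp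
    then have "Y = f (DD n #> g)" using x(2) fval[OF g(1)] by simp
    moreover have "DD n #> g \<in> carrier (G Mod DD n)" unfolding carG using g(1) by blast
    ultimately show "Y \<in> f ` carrier (G Mod DD n)" by blast
  qed
  have "f \<in> iso (G Mod DD n) (PS G Mod KK n)"
    unfolding iso_def bij_betw_def using hom inj surj by blast
  then show ?thesis unfolding f_def TD_eq .
qed

end

theorem mainTheorem1:
  fixes \<Gamma> :: "('a, 'b) monoid_scheme" and n :: nat
  assumes "group \<Gamma>"
  shows "(\<lambda>C. the_elem ((\<lambda>g. r_coset (PS \<Gamma>) (top_derived (PS \<Gamma>) (PS_topology \<Gamma>) n) (PS_canon \<Gamma> g)) ` C))
           \<in> iso (\<Gamma> Mod ((derived \<Gamma> ^^ n) (carrier \<Gamma>)))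
                 (PS \<Gamma> Mod top_derived (PS \<Gamma>) (PS_topology \<Gamma>) n)"
  using group.main_iso[OF assms] .

end
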